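(* Let $\mathcal I,\mathcal X$ be non-empty sets and let $(\mathcal I,\langle\cdot\rangle_x)_{x\in\mathcal X}$ be a family of partial magmas satisfying the bi-injectivity property: for all $a,a',b\in\mathcal I$ and $x,x'\in\mathcal X$, $\langle a'b\rangle_{x'}=\langle ab\rangle_x$ implies $x'=x$ and $a'=a$. Then every map $S:\mathcal X\times\mathcal X\to\mathcal X\times\mathcal X$, $S(x,y)=(u,v)$, satisfying the associativity condition $\langle a\langle bc\rangle_y\rangle_x=\langle\langle ab\rangle_u c\rangle_v$ for all $x,y\in\mathcal X$ (with $(u,v)=S(x,y)$) and all $a,b,c\in\mathcal I$, is a pentagon map.
   Context: A partial magma $(\mathcal I,\langle\cdot\rangle)$ is a non-empty set $\mathcal I$ with a binary operation $\langle\cdot\rangle:D\to\mathcal I$, $D\subseteq\mathcal I\times\mathcal I$, written $(a,b)\mapsto\langle ab\rangle$. For a set $Y$ and $S:Y\times Y\to Y\times Y$, define on $Y^3$: $S_{12}=S\times\mathrm{id}_Y$, $S_{23}=\mathrm{id}_Y\times S$, $S_{13}(y_1,y_2,y_3)=(p,y_2,q)$ with $(p,q)=S(y_1,y_3)$. $S$ is a pentagon map if $S_{12}\circ S_{13}\circ S_{23}=S_{23}\circ S_{12}$ (rightmost applied first). *)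

theory Defs
  imports Main
begin

text \<open>A partial binary operation on 'i is modelled as 'i \<Rightarrow> 'i \<Rightarrow> 'i option;
  its domain D is the set of pairs where the value is not None.\<close>

type_synonym 'i pmagma = "'i \<Rightarrow> 'i \<Rightarrow> 'i option"

definition S12 :: "('y \<times> 'y \<Rightarrow> 'y \<times> 'y) \<Rightarrow> 'y \<times> 'y \<times> 'y \<Rightarrow> 'y \<times> 'y \<times> 'y" where
  "S12 S = (\<lambda>(y1, y2, y3). let (p, q) = S (y1, y2) in (p, q, y3))"

definition S23 :: "('y \<times> 'y \<Rightarrow> 'y \<times> 'y) \<Rightarrow> 'y \<times> 'y \<times> 'y \<Rightarrow> 'y \<times> 'y \<times> 'y" where
  "S23 S = (\<lambda>(y1, y2, y3). let (p, q) = S (y2, y3) in (y1, p, q))"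

definition S13 :: "('y \<times> 'y \<Rightarrow> 'y \<times> 'y) \<Rightarrow> 'y \<times> 'y \<times> 'y \<Rightarrow> 'y \<times> 'y \<times> 'y" where
  "S13 S = (\<lambda>(y1, y2, y3). let (p, q) = S (y1, y3) in (p, y2, q))"

definition pentagon_map :: "('y \<times> 'y \<Rightarrow> 'y \<times> 'y) \<Rightarrow> bool" where
  "pentagon_map S \<longleftrightarrow> S12 S \<circ> S13 S \<circ> S23 S = S23 S \<circ> S12 S"

definition bi_injective :: "('x \<Rightarrow> 'i pmagma) \<Rightarrow> bool" where
  "bi_injective m \<longleftrightarrow> (\<forall>a a' b x x' c. m x' a' b = Some c \<longrightarrow> m x a b = Some c \<longrightarrow> x' = x \<and> a' = a)"

definition assoc_cond :: "('x \<Rightarrow> 'i pmagma) \<Rightarrow> ('x \<times> 'x \<Rightarrow> 'x \<times> 'x) \<Rightarrow> bool" where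
  "assoc_cond m S \<longleftrightarrow> (\<forall>x y a b c. \<exists>d.
      (case S (x, y) of (u, v) \<Rightarrow>
         Option.bind (m y b c) (\<lambda>bc. m x a bc) = Some d \<and>
         Option.bind (m u a b) (\<lambda>ab. m v ab c) = Some d))"

end

theory Submission
  imports Defs
begin

theorem mainTheorem2:
  fixes m :: "'x \<Rightarrow> 'i \<Rightarrow> 'i \<Rightarrow> 'i option"
    and S :: "'x \<times> 'x \<Rightarrow> 'x \<times> 'x"
  assumes "bi_injective m"
    and "assoc_cond m S"
  shows "pentagon_map S"
proof -
  define op where "op x a b = the (m x a b)" for x a b
  have tot: "m y b c = Some (op y b c)" for y b c
  proof -
    obtain d where "Option.bind (m y b c) (\<lambda>bc. m y b bc) = Some d"
    proof -
      obtain d where "case S (y, y) of (u, v) \<Rightarrow>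
         Option.bind (m y b c) (\<lambda>bc. m y b bc) = Some d \<and>
         Option.bind (m u b b) (\<lambda>ab. m v ab c) = Some d"
        using assms(2) unfolding assoc_cond_def by (elim allE[where x=y] allE[where x=b] allE[where x=c] exE) (rule that)
      then show ?thesis using that by (cases "S (y,y)") auto
    qed
    then show ?thesis unfolding op_def by (cases "m y b c") auto
  qed
  have as: "op x a (op y b c) = op (snd (S (x,y))) (op (fst (S (x,y))) a b) c" for x y a b c
  proof -
    obtain d where "case S (x, y) of (u, v) \<Rightarrow>
         Option.bind (m y b c) (\<lambda>bc. m x a bc) = Some d \<and>
         Option.bind (m u a b) (\<lambda>ab. m v ab c) = Some d"
      using assms(2) unfolding assoc_cond_def by (elim allE[where x=x] allE[where x=y] allE[where x=a] allE[where x=b] allE[where x=c] exE) (rule that)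
    then show ?thesis using tot by (cases "S (x,y)") auto
  qed
  have bi: "x' = x \<and> a' = a" if "op x' a' b = op x a b" for x x' a a' b
  proof -
    have "m x' a' b = Some (op x a b)" "m x a b = Some (op x a b)" using tot[of x' a' b] tot[of x a b] that by auto
    then show ?thesis using assms(1) unfolding bi_injective_def by blast
  qed
  show ?thesis unfolding pentagon_map_def
  proof
    fix t :: "'x \<times> 'x \<times> 'x"
    obtain x y z where t: "t = (x,y,z)" by (cases t) auto
    obtain u v where uv: "S (x,y) = (u,v)" by fastforce
    obtain p q where pq: "S (v,z) = (p,q)" by fastforce
    obtain u1 v1 where 1: "S (y,z) = (u1,v1)" by fastforce
    obtain u2 v2 where 2: "S (x,v1) = (u2,v2)" by fastforce
    obtain u3 v3 where 3: "S (u2,u1) = (u3,v3)" by fastforce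
    fix a b c d :: 'i
    have "op q (op p (op u a b) c) d = op v2 (op v3 (op u3 a b) c) d"
    proof -
      have "op x a (op y b (op z c d)) = op q (op p (op u a b) c) d"
        using as[of x a y b "op z c d"] as[of v "op u a b" z c d] uv pq by simp
      moreover have "op x a (op y b (op z c d)) = op v2 (op v3 (op u3 a b) c) d"
        using as[of y b z c d] as[of x a v1 "op u1 b c" d] as[of u2 a u1 b c] 1 2 3 by simp
      ultimately show ?thesis by simp
    qed
    then have "q = v2" "p = v3" "u = u3" using bi by blast+
    then show "(S12 S \<circ> S13 S \<circ> S23 S) t = (S23 S \<circ> S12 S) t"
      using t uv pq 1 2 3 by (simp add: S12_def S13_def S23_def)
  qed
qed

end
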